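(* Let $n\ge 2$ and $k\in\{0,\dots,n-1\}$, and let $\vec m=(m_1,\dots,m_{n-1})^t\in\mathbb{Z}_{\ge0}^{n-1}$ satisfy $k+\sum_{i=1}^{n-1} i\,m_i\equiv 0 \pmod n$. Put $N=\sum_{i=1}^{n-1}m_i$ and define heights $h_1,\dots,h_N$ by: $h_1=\dots=h_{m_{n-1}}=n-1$, the next $m_{n-2}$ of them equal $n-2$, and so on, the last $m_1$ of them equal $1$ (i.e. the sequence is weakly decreasing and the value $i$ occurs exactly $m_i$ times). Put $h_0=n$ and $w_a=2n-h_{a-1}-h_a$ for $1\le a\le N$. Then the parent graph associated to $\vec m$, i.e. the Ferrers graph with interpolating matrix $\begin{pmatrix} w_1&\cdots&w_N\\ h_1&\cdots&h_N\end{pmatrix}$, has $$\sum_{a=1}^{N} h_a\,(w_1+w_2+\dots+w_a)=n\,\vec m^{\,t}C^{-1}\vec m$$ nodes, where $C$ is the Cartan matrix of $sl(n)$.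
   Context: $C$ is the $(n-1)\times(n-1)$ Cartan matrix of $sl(n)$, $C_{ij}=2\delta_{i,j}-\delta_{i,j-1}-\delta_{i,j+1}$, whose inverse is $(C^{-1})_{ij}=i(n-j)/n$ for $i\le j$ and $j(n-i)/n$ for $i>j$. The Ferrers graph with interpolating matrix $\begin{pmatrix} w_1&\cdots&w_N\\ h_1&\cdots&h_N\end{pmatrix}$ (positive integers) is the diagram whose profile, starting from $(0,-H)$ with $H=\sum h_a$, moves $w_1$ steps right, $h_1$ steps up, $w_2$ steps right, etc., ending at $(W,0)$ with $W=\sum w_a$; its number of nodes is $\sum_{a=1}^N h_a(w_1+\dots+w_a)$. *)

theory Defs
  imports Main Complex_Main
begin

text \<open>Cartan matrix of sl(n), indices 1..n-1 (entries as in the paper).\<close>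
definition cartan :: "nat \<Rightarrow> nat \<Rightarrow> nat \<Rightarrow> real" where
  "cartan n i j = (if i = j then 2 else if i + 1 = j \<or> j + 1 = i then -1 else 0)"

definition cartan_inv :: "nat \<Rightarrow> nat \<Rightarrow> nat \<Rightarrow> real" where
  "cartan_inv n i j = (if i \<le> j then real i * real (n - j) / real n
                       else real j * real (n - i) / real n)"

definition ferrers_nodes :: "nat \<Rightarrow> (nat \<Rightarrow> int) \<Rightarrow> (nat \<Rightarrow> int) \<Rightarrow> int" where
  "ferrers_nodes N w h = (\<Sum>a=1..N. h a * (\<Sum>b=1..a. w b))"

end

theory Submission
  imports Defs
begin

lemma fib_sum:
  fixes h :: "nat \<Rightarrow> nat" and g :: "nat \<Rightarrow> 'b::comm_ring_1"
  assumes "finite A" "finite B" "h ` A \<subseteq> B"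
  shows "(\<Sum>a\<in>A. g (h a)) = (\<Sum>i\<in>B. of_nat (card {a\<in>A. h a = i}) * g i)"
proof -
  have "(\<Sum>a\<in>A. g (h a)) = (\<Sum>i\<in>B. \<Sum>a\<in>{a\<in>A. h a = i}. g (h a))"
    using sum.group[OF assms, of "\<lambda>a. g (h a)"] by simp
  also have "\<dots> = (\<Sum>i\<in>B. of_nat (card {a\<in>A. h a = i}) * g i)"
    by (rule sum.cong) auto
  finally show ?thesis .
qed

lemma wsum:
  fixes h :: "nat \<Rightarrow> nat" and w :: "nat \<Rightarrow> int"
  assumes "\<forall>a\<in>{1..N}. w a = 2 * int n - int (h (a - 1)) - int (h a)" "h 0 = n"
  shows "a \<in> {1..N} \<Longrightarrow> (\<Sum>b=1..a. w b) = 2*int n*a - n - h a - 2*(\<Sum>b=1..a-1. int (h b))"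
proof (induction a)
  case 0 then show ?case by simp
next
  case (Suc a)
  show ?case
  proof (cases "a = 0")
    case True then show ?thesis using assms Suc by simp
  next
    case False
    then have "(\<Sum>b=1..Suc a. w b) = (\<Sum>b=1..a. w b) + w (Suc a)" by simp
    also have "\<dots> = 2*int n*a - n - h a - 2*(\<Sum>b=1..a-1. int (h b)) + w (Suc a)"
      using Suc False by simp
    also have "(\<Sum>b=1..a-1. int (h b)) = (\<Sum>b=1..a. int (h b)) - h a"
      using False by (cases a) auto
    moreover have "w (Suc a) = 2 * int n - int (h a) - int (h (Suc a))"
      using assms(1) Suc.prems by auto
    ultimately show ?thesis by (simp add: algebra_simps)
  qed
qed

lemma sq_sum:
  fixes h :: "nat \<Rightarrow> int"
  shows "(\<Sum>a=1..N. h a * (h a + 2 * (\<Sum>b=1..a-1. h b))) = (\<Sum>a=1..N. h a)^2"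
proof (induction N)
  case 0 then show ?case by simp
next
  case (Suc N)
  have e: "(\<Sum>b=1..Suc N - 1. h b) = (\<Sum>a=1..N. h a)" by simp
  show ?case using Suc by (simp add: e power2_eq_square algebra_simps)
qed

lemma min_sum:
  fixes h :: "nat \<Rightarrow> nat"
  shows "(\<forall>a\<in>{1..N}. \<forall>b\<in>{1..N}. a \<le> b \<longrightarrow> h b \<le> h a) \<Longrightarrow>
    (\<Sum>a=1..N. \<Sum>b=1..N. int (min (h a) (h b))) = (\<Sum>a=1..N. int (h a) * (2 * int a - 1))"
proof (induction N)
  case 0 then show ?case by simp
next
  case (Suc N)
  have IH: "(\<Sum>a=1..N. \<Sum>b=1..N. int (min (h a) (h b))) = (\<Sum>a=1..N. int (h a) * (2 * int a - 1))"
    using Suc by auto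
  have le: "\<And>b. b \<in> {1..N} \<Longrightarrow> h (Suc N) \<le> h b"
    using Suc.prems by auto
  have m1: "\<And>b. b \<in> {1..N} \<Longrightarrow> min (h b) (h (Suc N)) = h (Suc N)"
    using le by (simp add: min_absorb2)
  have m2: "\<And>b. b \<in> {1..N} \<Longrightarrow> min (h (Suc N)) (h b) = h (Suc N)"
    using le by (simp add: min_absorb1)
  have "(\<Sum>a=1..Suc N. \<Sum>b=1..Suc N. int (min (h a) (h b)))
      = (\<Sum>a=1..N. \<Sum>b=1..N. int (min (h a) (h b))) + (\<Sum>a=1..N. int (min (h a) (h (Suc N))))
        + (\<Sum>b=1..N. int (min (h (Suc N)) (h b))) + h (Suc N)"
    by (simp add: sum.distrib)
  also have "(\<Sum>a=1..N. int (min (h a) (h (Suc N)))) = N * h (Suc N)"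
    using m1 by simp
  also have "(\<Sum>b=1..N. int (min (h (Suc N)) (h b))) = N * h (Suc N)"
    using m2 by simp
  finally show ?case using IH by (simp add: algebra_simps)
qed

lemma cinv:
  assumes "i \<le> n" "j \<le> n" "n > 0"
  shows "real n * cartan_inv n i j = real n * real (min i j) - real i * real j"
  using assms by (auto simp: cartan_inv_def of_nat_diff field_simps min_def)

theorem lemma1:
  fixes n k N :: nat and m h :: "nat \<Rightarrow> nat" and w :: "nat \<Rightarrow> int"
  assumes n2: "n \<ge> 2"
    and k: "k < n"
    and cong: "(k + (\<Sum>i=1..n-1. i * m i)) mod n = 0"
    and N_def: "N = (\<Sum>i=1..n-1. m i)"
    and h0: "h 0 = n"
    and h_range: "\<forall>a\<in>{1..N}. 1 \<le> h a \<and> h a \<le> n - 1"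
    and h_mono: "\<forall>a\<in>{1..N}. \<forall>b\<in>{1..N}. a \<le> b \<longrightarrow> h b \<le> h a"
    and h_count: "\<forall>i\<in>{1..n-1}. card {a\<in>{1..N}. h a = i} = m i"
    and w_def: "\<forall>a\<in>{1..N}. w a = 2 * int n - int (h (a - 1)) - int (h a)"
  shows "real_of_int (ferrers_nodes N w (\<lambda>a. int (h a)))
           = real n * (\<Sum>i=1..n-1. \<Sum>j=1..n-1. real (m i) * cartan_inv n i j * real (m j))"
proof -
  let ?S = "\<lambda>a. (\<Sum>b=1..a. int (h b))"
  have img: "h ` {1..N} \<subseteq> {1..n-1}" using h_range by auto
  have F1: "ferrers_nodes N w (\<lambda>a. int (h a))
      = (\<Sum>a=1..N. int (h a) * (2*int n*a - n)) - (\<Sum>a=1..N. int (h a) * (h a + 2 * ?S (a-1)))"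
    unfolding ferrers_nodes_def sum_subtractf[symmetric]
  proof (rule sum.cong)
    fix a assume a: "a \<in> {1..N}"
    show "int (h a) * sum w {1..a} = int (h a) * (2*int n*a - n) - int (h a) * (h a + 2 * ?S (a-1))"
    proof -
      have "sum w {1..a} = 2*int n*a - n - h a - 2*(\<Sum>b=1..a-1. int (h b))"
        using wsum[OF w_def h0 a] .
      then show ?thesis by (simp only:) (simp add: algebra_simps)
    qed
  qed simp
  have F2: "(\<Sum>a=1..N. int (h a) * (h a + 2 * ?S (a-1))) = (?S N)^2"
    using sq_sum[of "\<lambda>a. int (h a)"] by simp
  have F3: "(\<Sum>a=1..N. int (h a) * (2*int n*a - n)) = int n * (\<Sum>a=1..N. int (h a) * (2 * int a - 1))"
    by (simp add: sum_distrib_left algebra_simps)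
  have F4: "(\<Sum>a=1..N. int (h a) * (2 * int a - 1)) = (\<Sum>a=1..N. \<Sum>b=1..N. int (min (h a) (h b)))"
    using min_sum[OF h_mono] by simp
  have G: "\<And>g :: nat \<Rightarrow> int. (\<Sum>a=1..N. g (h a)) = (\<Sum>i=1..n-1. int (m i) * g i)"
  proof -
    fix g :: "nat \<Rightarrow> int"
    have "(\<Sum>a=1..N. g (h a)) = (\<Sum>i=1..n-1. of_nat (card {a\<in>{1..N}. h a = i}) * g i)"
      by (rule fib_sum) (use img in auto)
    also have "\<dots> = (\<Sum>i=1..n-1. int (m i) * g i)"
      by (rule sum.cong) (use h_count in auto)
    finally show "(\<Sum>a=1..N. g (h a)) = (\<Sum>i=1..n-1. int (m i) * g i)" .
  qed
  have F5: "?S N = (\<Sum>i=1..n-1. int (m i) * int i)" using G[of int] by simp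
  have F6: "(\<Sum>a=1..N. \<Sum>b=1..N. int (min (h a) (h b)))
       = (\<Sum>i=1..n-1. \<Sum>j=1..n-1. int (m i) * int (m j) * int (min i j))"
  proof -
    have "(\<Sum>a=1..N. \<Sum>b=1..N. int (min (h a) (h b))) = (\<Sum>a=1..N. \<Sum>j=1..n-1. int (m j) * int (min (h a) j))"
    proof (rule sum.cong)
      fix a show "(\<Sum>b=1..N. int (min (h a) (h b))) = (\<Sum>j=1..n-1. int (m j) * int (min (h a) j))"
        using G[of "\<lambda>x. int (min (h a) x)"] by simp
    qed simp
    also have "\<dots> = (\<Sum>i=1..n-1. int (m i) * (\<Sum>j=1..n-1. int (m j) * int (min i j)))"
      by (rule G[of "\<lambda>x. (\<Sum>j=1..n-1. int (m j) * int (min x j))"])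
    finally show ?thesis by (simp add: sum_distrib_left algebra_simps)
  qed
  have LHS: "ferrers_nodes N w (\<lambda>a. int (h a)) = int n * (\<Sum>i=1..n-1. \<Sum>j=1..n-1. int (m i) * int (m j) * int (min i j))
       - (\<Sum>i=1..n-1. int (m i) * int i)^2"
    using F1 F2 F3 F4 F5 F6 by simp
  have R: "real n * (\<Sum>i=1..n-1. \<Sum>j=1..n-1. real (m i) * cartan_inv n i j * real (m j))
      = (\<Sum>i=1..n-1. \<Sum>j=1..n-1. real (m i) * real (m j) * (real n * real (min i j) - real i * real j))"
    unfolding sum_distrib_left
    by (intro sum.cong refl) (use n2 in \<open>auto simp: cinv[symmetric]\<close>)
  also have "\<dots> = real n * (\<Sum>i=1..n-1. \<Sum>j=1..n-1. real (m i) * real (m j) * real (min i j))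
       - (\<Sum>i=1..n-1. real (m i) * real i)^2"
    by (simp add: power2_eq_square sum_product sum_distrib_left sum_subtractf[symmetric] algebra_simps)
  finally show ?thesis unfolding LHS by simp
qed

end
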